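(* There is a universal constant $c>0$ such that the following holds. Let $\Omega\subset\mathbb R^d$ be compact, $\mu$ a probability measure on $\Omega$, $X_N$ an $N$-dimensional subspace of $\mathcal C(\Omega)$, $q\in[2,\infty)$, and $H>0$ such that $\|f\|_\infty\le H\|f\|_q$ for all $f\in X_N$. Let $X_N^q:=\{f\in X_N:\|f\|_q\le1\}$, let $\mathbf x_1,\dots,\mathbf x_m\in\Omega$ be arbitrary fixed points, and let $\chi_1,\dots,\chi_m$ be independent symmetric Bernoulli random variables taking values $\pm1$. Then $$ \mathbb E\Big[\sup_{f\in X_N^q}\Big|\sum_{j=1}^m\chi_j|f(\mathbf x_j)|^q\Big|\Big]\le cqH^{q/2}N^{1/2}\sup_{h\in X_N^q}\Big(\sum_{j=1}^m|h(\mathbf x_j)|^q\Big)^{1/2}. $$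
   Context: $\|f\|_q=(\int_\Omega|f|^qd\mu)^{1/q}$ and $\|f\|_\infty=\max_{\mathbf x\in\Omega}|f(\mathbf x)|$. *)

theory Defs
  imports "HOL-Analysis.Analysis" "HOL-Probability.Probability" "HOL-Library.Function_Algebras"
begin

text \<open>Points of R^d are represented as functions nat => real vanishing from index d on;
  the (product) topology of nat => real restricted to this set is the Euclidean topology.\<close>
definition Rd_set :: "nat \<Rightarrow> (nat \<Rightarrow> real) set" where
  "Rd_set d = {x. \<forall>i\<ge>d. x i = 0}"

definition fscale :: "real \<Rightarrow> ('a \<Rightarrow> real) \<Rightarrow> ('a \<Rightarrow> real)" where
  "fscale c f = (\<lambda>x. c * f x)"

lemma vector_space_fscale: "vector_space fscale"
  by unfold_locales (auto simp: fscale_def fun_eq_iff algebra_simps)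

text \<open>C(Omega): continuous functions on Omega (normalised to be 0 outside Omega,
  so that each element of C(Omega) has exactly one representative).\<close>
definition C_space :: "'a::topological_space set \<Rightarrow> ('a \<Rightarrow> real) set" where
  "C_space \<Omega> = {f. continuous_on \<Omega> f \<and> (\<forall>x. x \<notin> \<Omega> \<longrightarrow> f x = 0)}"

definition Lq_norm :: "'a measure \<Rightarrow> real \<Rightarrow> ('a \<Rightarrow> real) \<Rightarrow> real" where
  "Lq_norm \<mu> q f = (\<integral>x. \<bar>f x\<bar> powr q \<partial>\<mu>) powr (1 / q)"

definition sup_norm :: "'a set \<Rightarrow> ('a \<Rightarrow> real) \<Rightarrow> real" where
  "sup_norm \<Omega> f = (SUP x\<in>\<Omega>. \<bar>f x\<bar>)"

end

theory Submission
  imports Defs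
begin

lemma cosh_le: fixes x::real shows "(exp x + exp (-x)) / 2 \<le> exp (x^2/2)"
proof -
  have *: "(exp y + exp (-y)) / 2 \<le> exp (y^2/2)" if "y \<ge> 0" for y::real
  proof -
    have "-(2*y) * (1/2) + ln (1 + (1/2) * (exp (2*y) - 1)) \<le> (2*y)\<^sup>2 / 8"
      using Hoeffdings_lemma_aux[of "2*y" "1/2"] that by simp
    hence "ln ((1 + exp (2*y))/2) \<le> y + y^2/2" by (simp add: power2_eq_square field_simps)
    hence "(1 + exp (2*y))/2 \<le> exp (y + y^2/2)"
      by (smt (verit) exp_ln exp_le_cancel_iff exp_gt_zero)
    hence "(1 + exp (2*y))/2 * exp (-y) \<le> exp (y + y^2/2) * exp (-y)" by simp
    moreover have "(1 + exp (2*y))/2 * exp (-y) = (exp y + exp (-y)) / 2"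
      by (simp add: field_simps flip: exp_add)
    moreover have "exp (y + y^2/2) * exp (-y) = exp (y^2/2)" by (simp flip: exp_add)
    ultimately show ?thesis by simp
  qed
  show ?thesis
  proof (cases "x \<ge> 0")
    case True thus ?thesis using * by simp
  next
    case False thus ?thesis using *[of "-x"] by (simp add: add.commute)
  qed
qed

lemma card_Eps: "card ({..<m::nat} \<rightarrow>\<^sub>E {-1, 1::real}) = 2^m"
  by (simp add: card_PiE numeral_2_eq_2)

lemma finite_Eps: "finite ({..<m::nat} \<rightarrow>\<^sub>E {-1, 1::real})"
  by (intro finite_PiE) auto

lemma mgf_rademacher:
  fixes a :: "nat \<Rightarrow> real"
  shows "(\<Sum>\<epsilon>\<in>({..<m} \<rightarrow>\<^sub>E {-1, 1::real}). exp (l * (\<Sum>j<m. \<epsilon> j * a j)))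
         \<le> 2^m * exp (l^2 * (\<Sum>j<m. (a j)^2) / 2)"
proof -
  have "(\<Sum>\<epsilon>\<in>({..<m} \<rightarrow>\<^sub>E {-1, 1::real}). exp (l * (\<Sum>j<m. \<epsilon> j * a j)))
      = (\<Sum>\<epsilon>\<in>({..<m} \<rightarrow>\<^sub>E {-1, 1::real}). \<Prod>j<m. exp (l * a j * \<epsilon> j))"
    by (intro sum.cong refl) (simp add: sum_distrib_left exp_sum mult_ac)
  also have "\<dots> = (\<Prod>j<m. \<Sum>e\<in>{-1,1::real}. exp (l * a j * e))"
    by (rule prod_sum_PiE[symmetric]) auto
  also have "\<dots> = (\<Prod>j<m. exp (l * a j) + exp (- (l * a j)))"
    by (simp add: add.commute)
  also have "\<dots> \<le> (\<Prod>j<m. 2 * exp ((l * a j)^2 / 2))"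
  proof (rule prod_mono)
    fix j show "0 \<le> exp (l * a j) + exp (- (l * a j)) \<and> exp (l * a j) + exp (- (l * a j)) \<le> 2 * exp ((l * a j)^2 / 2)"
      using cosh_le[of "l * a j"] by (simp add: add_nonneg_nonneg)
  qed
  also have "\<dots> = 2^m * exp (l^2 * (\<Sum>j<m. (a j)^2) / 2)"
    by (simp add: prod.distrib exp_sum[symmetric] sum_divide_distrib sum_distrib_left power_mult_distrib)
  finally show ?thesis .
qed

lemma max_ineq:
  fixes a :: "'i \<Rightarrow> nat \<Rightarrow> real"
  assumes I: "finite I" "I \<noteq> {}" and sg: "\<sigma> \<ge> 0"
    and bnd: "\<And>i. i \<in> I \<Longrightarrow> (\<Sum>j<m. (a i j)^2) \<le> \<sigma>^2"
    and Lg: "Lg > 0" "ln (2 * real (card I)) \<le> Lg"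
  shows "(\<Sum>\<epsilon>\<in>({..<m} \<rightarrow>\<^sub>E {-1,1::real}). Max ((\<lambda>i. \<bar>\<Sum>j<m. \<epsilon> j * a i j\<bar>) ` I)) / 2^m
         \<le> \<sigma> * sqrt (2*Lg)"
proof (cases "\<sigma> = 0")
  case True
  have "a i j = 0" if "i \<in> I" "j < m" for i j
  proof -
    have "(\<Sum>j<m. (a i j)^2) \<le> 0" using bnd[OF that(1)] True by simp
    hence "(\<Sum>j<m. (a i j)^2) = 0" by (meson order_antisym sum_nonneg zero_le_power2)
    hence "\<forall>j\<in>{..<m}. (a i j)^2 = 0" by (subst (asm) sum_nonneg_eq_0_iff) auto
    thus ?thesis using that by simp
  qed
  hence "Max ((\<lambda>i. \<bar>\<Sum>j<m. \<epsilon> j * a i j\<bar>) ` I) = 0" for \<epsilon>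
    using I by (simp cong: image_cong)
  thus ?thesis using True by simp
next
  case False
  hence sp: "\<sigma> > 0" using sg by simp
  define E where "E = ({..<m} \<rightarrow>\<^sub>E {-1,1::real})"
  define Z where "Z = (\<lambda>i \<epsilon>. \<Sum>j<m. \<epsilon> j * a i j)"
  define M where "M = (\<lambda>\<epsilon>. Max ((\<lambda>i. \<bar>Z i \<epsilon>\<bar>) ` I))"
  define l where "l = sqrt (2*Lg) / \<sigma>"
  have lpos: "l > 0" using sp Lg by (simp add: l_def)
  have fE: "finite E" and cE: "card E = 2^m" and nE: "E \<noteq> {}"
    using card_Eps[of m] finite_Eps[of m] by (auto simp: E_def)
  have "exp (\<Sum>\<epsilon>\<in>E. (1 / 2^m) * (l * M \<epsilon>)) \<le> (\<Sum>\<epsilon>\<in>E. (1 / 2^m) * exp (l * M \<epsilon>))"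
    using convex_on_sum[OF fE nE exp_convex, of "\<lambda>_. 1/2^m" "\<lambda>\<epsilon>. l * M \<epsilon>"] by (simp add: cE)
  also have "\<dots> = (\<Sum>\<epsilon>\<in>E. exp (l * M \<epsilon>)) / 2^m"
    by (simp add: sum_divide_distrib)
  also have "(\<Sum>\<epsilon>\<in>E. exp (l * M \<epsilon>)) \<le> (\<Sum>\<epsilon>\<in>E. \<Sum>i\<in>I. exp (l * Z i \<epsilon>) + exp ((-l) * Z i \<epsilon>))"
  proof (rule sum_mono)
    fix \<epsilon> assume "\<epsilon> \<in> E"
    have "M \<epsilon> \<in> (\<lambda>i. \<bar>Z i \<epsilon>\<bar>) ` I" unfolding M_def using I by (intro Max_in) auto
    then obtain i0 where i0: "i0 \<in> I" "M \<epsilon> = \<bar>Z i0 \<epsilon>\<bar>" by auto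
    have "exp (l * M \<epsilon>) \<le> exp (l * Z i0 \<epsilon>) + exp ((-l) * Z i0 \<epsilon>)"
      using i0(2) by (cases "Z i0 \<epsilon> \<ge> 0") (auto simp: add_increasing add_increasing2)
    also have "\<dots> \<le> (\<Sum>i\<in>I. exp (l * Z i \<epsilon>) + exp ((-l) * Z i \<epsilon>))"
      by (rule member_le_sum[OF i0(1)]) (auto intro: add_nonneg_nonneg I)
    finally show "exp (l * M \<epsilon>) \<le> (\<Sum>i\<in>I. exp (l * Z i \<epsilon>) + exp ((-l) * Z i \<epsilon>))" .
  qed
  also have "\<dots> = (\<Sum>i\<in>I. (\<Sum>\<epsilon>\<in>E. exp (l * Z i \<epsilon>)) + (\<Sum>\<epsilon>\<in>E. exp ((-l) * Z i \<epsilon>)))"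
    by (subst sum.swap) (simp add: sum.distrib)
  also have "\<dots> \<le> (\<Sum>i\<in>I. 2^m * exp (l^2 * \<sigma>^2 / 2) + 2^m * exp (l^2 * \<sigma>^2 / 2))"
  proof (rule sum_mono)
    fix i assume i: "i \<in> I"
    have b: "2^m * exp (l^2 * (\<Sum>j<m. (a i j)^2) / 2) \<le> 2^m * exp (l^2 * \<sigma>^2 / 2)"
      using bnd[OF i] by (simp add: mult_left_mono)
    have m1: "(\<Sum>\<epsilon>\<in>E. exp (l * Z i \<epsilon>)) \<le> 2^m * exp (l^2 * (\<Sum>j<m. (a i j)^2) / 2)"
      using mgf_rademacher[where l=l and m=m and a="a i"] unfolding E_def Z_def by simp
    have m2: "(\<Sum>\<epsilon>\<in>E. exp ((-l) * Z i \<epsilon>)) \<le> 2^m * exp (l^2 * (\<Sum>j<m. (a i j)^2) / 2)"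
      using mgf_rademacher[where l="-l" and m=m and a="a i"] unfolding E_def Z_def by simp
    show "(\<Sum>\<epsilon>\<in>E. exp (l * Z i \<epsilon>)) + (\<Sum>\<epsilon>\<in>E. exp ((-l) * Z i \<epsilon>)) \<le> 2^m * exp (l^2 * \<sigma>^2 / 2) + 2^m * exp (l^2 * \<sigma>^2 / 2)"
      using order_trans[OF m1 b] order_trans[OF m2 b] by (rule add_mono)
  qed
  also have "\<dots> = 2 * real (card I) * 2^m * exp (l^2 * \<sigma>^2 / 2)"
    by simp
  finally have "exp (\<Sum>\<epsilon>\<in>E. (1 / 2^m) * (l * M \<epsilon>)) \<le> 2 * real (card I) * exp (l^2 * \<sigma>^2 / 2)"
    by (simp add: divide_right_mono)
  moreover have "(\<Sum>\<epsilon>\<in>E. (1 / 2^m) * (l * M \<epsilon>)) = l * ((\<Sum>\<epsilon>\<in>E. M \<epsilon>) / 2^m)"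
    by (simp add: sum_distrib_left sum_divide_distrib mult_ac)
  ultimately have "exp (l * ((\<Sum>\<epsilon>\<in>E. M \<epsilon>) / 2^m)) \<le> exp (ln (2 * real (card I)) + l^2 * \<sigma>^2 / 2)"
    using I by (simp add: exp_add card_gt_0_iff)
  hence "l * ((\<Sum>\<epsilon>\<in>E. M \<epsilon>) / 2^m) \<le> ln (2 * real (card I)) + l^2 * \<sigma>^2 / 2" by simp
  also have "l^2 * \<sigma>^2 = 2 * Lg" using sp Lg by (simp add: l_def power_divide)
  finally have "l * ((\<Sum>\<epsilon>\<in>E. M \<epsilon>) / 2^m) \<le> 2 * Lg" using Lg by simp
  hence "(\<Sum>\<epsilon>\<in>E. M \<epsilon>) / 2^m \<le> 2 * Lg / l" using lpos by (simp add: field_simps)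
  also have "2 * Lg / l = \<sigma> * sqrt (2 * Lg)"
    using sp Lg by (simp add: l_def field_simps)
  finally show ?thesis by (simp add: M_def Z_def E_def)
qed

lemma powr_diff_le:
  fixes a b q :: real
  assumes "0 \<le> b" "b \<le> a" "q \<ge> 1"
  shows "a powr q - b powr q \<le> q * a powr (q - 1) * (a - b)"
proof (cases "b = a")
  case True thus ?thesis by simp
next
  case False
  hence ba: "b < a" using assms by simp
  show ?thesis
  proof (cases "b = 0")
    case True
    have "a powr q = a powr (q - 1) * a" using ba True assms
      by (simp add: powr_mult_base mult.commute)
    hence "a powr q \<le> q * a powr (q - 1) * a" using assms ba True
      by (simp add: mult_right_mono)
    thus ?thesis using True assms by simp
  next
    case False
    hence b0: "b > 0" using assms by simp
    have "\<And>x. b \<le> x \<Longrightarrow> x \<le> a \<Longrightarrow> ((\<lambda>x. x powr q) has_real_derivative q * x powr (q - 1)) (at x)"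
      using b0 by (auto intro!: derivative_eq_intros)
    from MVT2[OF ba this] obtain z where z: "b < z" "z < a"
      "a powr q - b powr q = (a - b) * (q * z powr (q - 1))" by auto
    have "z powr (q - 1) \<le> a powr (q - 1)" using z b0 assms by (intro powr_mono2) auto
    hence "(a - b) * (q * z powr (q - 1)) \<le> (a - b) * (q * a powr (q - 1))"
      using ba assms by (intro mult_left_mono) auto
    thus ?thesis using z by (simp add: mult_ac)
  qed
qed

lemma powr_abs_lip:
  fixes a b q H :: real
  assumes "\<bar>a\<bar> \<le> H" "\<bar>b\<bar> \<le> H" "q \<ge> 1"
  shows "\<bar>\<bar>a\<bar> powr q - \<bar>b\<bar> powr q\<bar> \<le> q * H powr (q - 1) * \<bar>a - b\<bar>"
proof -
  have *: "\<bar>s powr q - t powr q\<bar> \<le> q * H powr (q - 1) * \<bar>a - b\<bar>"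
    if st: "0 \<le> t" "t \<le> s" "s \<le> H" "s - t \<le> \<bar>a - b\<bar>" for s t
  proof -
    have "t powr q \<le> s powr q" using st by (intro powr_mono2) (use assms in auto)
    hence "\<bar>s powr q - t powr q\<bar> = s powr q - t powr q" by simp
    also have "\<dots> \<le> q * s powr (q - 1) * (s - t)" using powr_diff_le[OF st(1,2) assms(3)] .
    also have "\<dots> \<le> q * H powr (q - 1) * \<bar>a - b\<bar>"
      using st assms by (intro mult_mono powr_mono2) auto
    finally show ?thesis .
  qed
  show ?thesis
  proof (cases "\<bar>b\<bar> \<le> \<bar>a\<bar>")
    case True thus ?thesis using *[of "\<bar>b\<bar>" "\<bar>a\<bar>"] assms by auto
  next
    case False thus ?thesis using *[of "\<bar>a\<bar>" "\<bar>b\<bar>"] assms by (auto simp: abs_minus_commute)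
  qed
qed

lemma powr_abs_sq_incr:
  fixes a b q H :: real
  assumes "\<bar>a\<bar> \<le> H" "\<bar>b\<bar> \<le> H" "q \<ge> 2" "H > 0"
  shows "(\<bar>a\<bar> powr q - \<bar>b\<bar> powr q)^2 \<le> q^2 * (a - b)^2 * H powr (q - 2) * (\<bar>a\<bar> powr q + \<bar>b\<bar> powr q)"
proof -
  have *: "(s powr q - t powr q)^2 \<le> q^2 * (a - b)^2 * H powr (q - 2) * (s powr q + t powr q)"
    if st: "0 \<le> t" "t \<le> s" "s \<le> H" "s - t \<le> \<bar>a - b\<bar>" for s t
  proof (cases "s = 0")
    case True thus ?thesis using st by simp
  next
    case False
    hence s0: "s > 0" using st by simp
    have "t powr q \<le> s powr q" using st by (intro powr_mono2) (use assms in auto)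
    have d0: "0 \<le> s powr q - t powr q" using \<open>t powr q \<le> s powr q\<close> by simp
    have d1: "s powr q - t powr q \<le> q * s powr (q - 1) * \<bar>a - b\<bar>"
    proof -
      have "s powr q - t powr q \<le> q * s powr (q - 1) * (s - t)"
        using powr_diff_le[OF st(1,2)] assms by simp
      also have "\<dots> \<le> q * s powr (q - 1) * \<bar>a - b\<bar>"
        using st assms by (intro mult_left_mono) auto
      finally show ?thesis .
    qed
    have "(s powr q - t powr q)^2 \<le> (q * s powr (q - 1) * \<bar>a - b\<bar>)^2"
      using d0 d1 by (intro power_mono) auto
    also have "\<dots> = q^2 * (a - b)^2 * (s powr (q - 1))^2"
      by (simp add: power_mult_distrib)
    also have "(s powr (q - 1))^2 = s powr (q - 2) * s powr q"
      using s0 by (simp add: power2_eq_square powr_add[symmetric])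
    also have "q^2 * (a - b)^2 * (s powr (q - 2) * s powr q) \<le> q^2 * (a - b)^2 * (H powr (q - 2) * (s powr q + t powr q))"
      using st s0 assms by (intro mult_left_mono mult_mono powr_mono2) auto
    finally show ?thesis by (simp add: mult_ac)
  qed
  show ?thesis
  proof (cases "\<bar>b\<bar> \<le> \<bar>a\<bar>")
    case True thus ?thesis using *[of "\<bar>b\<bar>" "\<bar>a\<bar>"] assms by auto
  next
    case False
    have "(\<bar>a\<bar> powr q - \<bar>b\<bar> powr q)^2 = (\<bar>b\<bar> powr q - \<bar>a\<bar> powr q)^2" by (simp add: power2_commute)
    have h: "\<bar>b\<bar> - \<bar>a\<bar> \<le> \<bar>a - b\<bar>" by arith
    have "(\<bar>b\<bar> powr q - \<bar>a\<bar> powr q)^2 \<le> q^2 * (a - b)^2 * H powr (q - 2) * (\<bar>b\<bar> powr q + \<bar>a\<bar> powr q)"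
      using False h *[of "\<bar>a\<bar>" "\<bar>b\<bar>"] assms by auto
    thus ?thesis using \<open>(\<bar>a\<bar> powr q - \<bar>b\<bar> powr q)^2 = _\<close> by (simp add: add.commute)
  qed
qed

lemma ln_card_bound:
  fixes c :: real and K :: nat
  assumes "1 \<le> c" "c \<le> 2^K"
  shows "ln (2 * c) \<le> real K + 1"
proof -
  have "ln (2 * c) \<le> ln (2^(K+1))" using assms by (subst ln_le_cancel_iff) auto
  also have "\<dots> = real (K+1) * ln 2" using ln_realpow[of 2 "K+1"] by simp
  also have "\<dots> \<le> real (K+1)" using ln_2_less_1 by simp
  finally show ?thesis by simp
qed

lemma telescope_weights: "(\<Sum>l<L. (real l + 3) / 2^l) = 8 - (real L + 4) / 2^L * 2"
proof (induction L)
  case (Suc L)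
  have "(\<Sum>l<Suc L. (real l + 3) / 2^l) = 8 - (real L + 4) / 2^L * 2 + (real L + 3) / 2^L"
    by (simp add: Suc.IH)
  also have "\<dots> = 8 - (real (Suc L) + 4) / 2^(Suc L) * 2" by (simp add: field_simps)
  finally show ?case .
qed simp

lemma chaining:
  fixes T :: "'t set" and \<phi> :: "'t \<Rightarrow> nat \<Rightarrow> real" and m n :: nat and q H S :: real
  assumes T: "T \<noteq> {}" and q: "q \<ge> 2" and H: "H > 0" and n: "n \<ge> 1"
    and bnd: "\<And>t j. t \<in> T \<Longrightarrow> j < m \<Longrightarrow> \<bar>\<phi> t j\<bar> \<le> H"
    and Sb: "\<And>t. t \<in> T \<Longrightarrow> (\<Sum>j<m. \<bar>\<phi> t j\<bar> powr q) \<le> S"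
    and cov: "\<And>\<delta>. \<delta> > 0 \<Longrightarrow> \<exists>Net. Net \<subseteq> T \<and> finite Net \<and> real (card Net) \<le> (1 + 2*H/\<delta>)^n \<and>
                   (\<forall>t\<in>T. \<exists>s\<in>Net. \<forall>j<m. \<bar>\<phi> t j - \<phi> s j\<bar> \<le> \<delta>)"
  shows "(\<Sum>\<epsilon>\<in>({..<m} \<rightarrow>\<^sub>E {-1, 1::real}). (SUP t\<in>T. \<bar>\<Sum>j<m. \<epsilon> j * \<bar>\<phi> t j\<bar> powr q\<bar>)) / 2^m
         \<le> 50 * q * H powr (q / 2) * sqrt (real n) * sqrt S"
proof -
  define E where "E = ({..<m} \<rightarrow>\<^sub>E {-1, 1::real})"
  have fE: "finite E" and cE: "card E = 2^m" using finite_Eps card_Eps by (auto simp: E_def)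
  obtain t0 where t0: "t0 \<in> T" using T by auto
  have S0: "S \<ge> 0" using Sb[OF t0] by (smt (verit) powr_ge_zero sum_nonneg)
  define K0 where "K0 = q * H powr (q / 2) * sqrt S * sqrt (real n)"
  have K0: "K0 \<ge> 0" using q S0 by (simp add: K0_def)
  have "\<forall>l. \<exists>Net. Net \<subseteq> T \<and> finite Net \<and> real (card Net) \<le> (1 + 2*H/(H/2^l))^n \<and>
                   (\<forall>t\<in>T. \<exists>s\<in>Net. \<forall>j<m. \<bar>\<phi> t j - \<phi> s j\<bar> \<le> H/2^l)"
    using H by (intro allI cov) simp
  from choice[OF this] obtain Net where Net0: "\<forall>l. Net l \<subseteq> T \<and> finite (Net l) \<and> real (card (Net l)) \<le> (1 + 2*H/(H/2^l))^n \<and>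
                   (\<forall>t\<in>T. \<exists>s\<in>Net l. \<forall>j<m. \<bar>\<phi> t j - \<phi> s j\<bar> \<le> H/2^l)" by blast
  have Net: "\<And>l. Net l \<subseteq> T" "\<And>l. finite (Net l)"
    "\<And>l. real (card (Net l)) \<le> (1 + 2*H/(H/2^l))^n"
    "\<And>l t. t \<in> T \<Longrightarrow> \<exists>s\<in>Net l. \<forall>j<m. \<bar>\<phi> t j - \<phi> s j\<bar> \<le> H/2^l"
    using Net0 by simp_all
  define \<pi> where "\<pi> = (\<lambda>l t. SOME s. s \<in> Net l \<and> (\<forall>j<m. \<bar>\<phi> t j - \<phi> s j\<bar> \<le> H/2^l))"
  have \<pi>0: "\<pi> l t \<in> Net l \<and> (\<forall>j<m. \<bar>\<phi> t j - \<phi> (\<pi> l t) j\<bar> \<le> H/2^l)" if "t \<in> T" for l t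
  proof -
    from Net(4)[OF that, of l] have ex: "\<exists>s. s \<in> Net l \<and> (\<forall>j<m. \<bar>\<phi> t j - \<phi> s j\<bar> \<le> H/2^l)" by blast
    show ?thesis unfolding \<pi>_def by (rule someI_ex[OF ex])
  qed
  have \<pi>: "\<And>l t. t \<in> T \<Longrightarrow> \<pi> l t \<in> Net l"
    "\<And>l t j. t \<in> T \<Longrightarrow> j < m \<Longrightarrow> \<bar>\<phi> t j - \<phi> (\<pi> l t) j\<bar> \<le> H/2^l"
    using \<pi>0 by auto
  have cardNet: "real (card (Net l)) \<le> (2::real)^((l+2)*n)" for l
  proof -
    have "(1 + 2*H/(H/2^l)) = 1 + 2^(l+1)" using H by simp
    also have "\<dots> \<le> 2^(l+2)"
    proof -
      have a: "(1::real) \<le> 2^l" by simp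
      have "(2::real)^(l+2) = 2 * 2^l + 2 * 2^l" by simp
      moreover have "(2::real)^(l+1) = 2 * 2^l" by simp
      ultimately show ?thesis using a by linarith
    qed
    finally have b: "(1 + 2*H/(H/2^l)) \<le> 2^(l+2)" .
    have "(1 + 2*H/(H/2^l))^n \<le> (2^(l+2))^n"
      by (rule power_mono[OF b]) (use H in simp)
    hence "real (card (Net l)) \<le> (2^(l+2))^n"
      using Net(3)[of l] by linarith
    thus ?thesis by (simp only: power_mult)
  qed
  have NetT: "Net l \<noteq> {}" for l using \<pi>(1)[OF t0] by auto
  have cardNet1: "1 \<le> real (card (Net l))" for l using NetT[of l] Net(2)[of l]
    by (simp add: Suc_le_eq card_gt_0_iff)
  define \<psi> where "\<psi> = (\<lambda>t j. \<bar>\<phi> t j\<bar> powr q)"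
  define F where "F = (\<lambda>\<epsilon> t. \<Sum>j<m. \<epsilon> j * \<psi> t j)"
  define P where "P = (\<lambda>l. {p \<in> Net (Suc l) \<times> Net l. \<forall>j<m. \<bar>\<phi> (fst p) j - \<phi> (snd p) j\<bar> \<le> 3 * H / 2^(Suc l)})"
  define A0 where "A0 = (\<lambda>\<epsilon>. Max ((\<lambda>u. \<bar>\<Sum>j<m. \<epsilon> j * \<psi> u j\<bar>) ` Net 0))"
  define Al where "Al = (\<lambda>l \<epsilon>. Max ((\<lambda>p. \<bar>\<Sum>j<m. \<epsilon> j * (\<psi> (fst p) j - \<psi> (snd p) j)\<bar>) ` P l))"
  define R where "R = (\<lambda>L::nat. real m * (q * H powr q) / 2^L)"
  have finP: "finite (P l)" for l unfolding P_def
    by (rule finite_subset[of _ "Net (Suc l) \<times> Net l"]) (auto simp: Net(2))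
  have Ppi: "(\<pi> (Suc l) t, \<pi> l t) \<in> P l" if t: "t \<in> T" for l t
  proof -
    have "\<bar>\<phi> (\<pi> (Suc l) t) j - \<phi> (\<pi> l t) j\<bar> \<le> 3 * H / 2^(Suc l)" if j: "j < m" for j
    proof -
      have "\<bar>\<phi> (\<pi> (Suc l) t) j - \<phi> (\<pi> l t) j\<bar> \<le> \<bar>\<phi> t j - \<phi> (\<pi> (Suc l) t) j\<bar> + \<bar>\<phi> t j - \<phi> (\<pi> l t) j\<bar>"
        by arith
      also have "\<dots> \<le> H / 2^(Suc l) + H/2^l" using \<pi>(2)[OF t j] by (intro add_mono)
      also have "\<dots> = 3 * H / 2^(Suc l)" by (simp add: field_simps)
      finally show ?thesis .
    qed
    thus ?thesis using \<pi>(1)[OF t] unfolding P_def by auto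
  qed
  have PT: "P l \<noteq> {}" for l using Ppi[OF t0] by auto
  have point: "\<bar>F \<epsilon> t\<bar> \<le> A0 \<epsilon> + (\<Sum>l<L. Al l \<epsilon>) + R L" if e: "\<epsilon> \<in> E" and t: "t \<in> T" for \<epsilon> t L
  proof -
    have eps: "\<bar>\<epsilon> j\<bar> = 1" if "j < m" for j
    proof -
      have "\<epsilon> j \<in> {-1,1}" using e that by (auto simp: E_def PiE_def Pi_def)
      thus ?thesis by auto
    qed
    have tele: "F \<epsilon> (\<pi> L t) = F \<epsilon> (\<pi> 0 t) + (\<Sum>l<L. F \<epsilon> (\<pi> (Suc l) t) - F \<epsilon> (\<pi> l t))"
      using sum_lessThan_telescope[of "\<lambda>l. F \<epsilon> (\<pi> l t)" L] by simp
    have "\<bar>F \<epsilon> t\<bar> \<le> \<bar>F \<epsilon> (\<pi> 0 t)\<bar> + (\<Sum>l<L. \<bar>F \<epsilon> (\<pi> (Suc l) t) - F \<epsilon> (\<pi> l t)\<bar>) + \<bar>F \<epsilon> t - F \<epsilon> (\<pi> L t)\<bar>"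
    proof -
      have "F \<epsilon> t = F \<epsilon> (\<pi> 0 t) + (\<Sum>l<L. F \<epsilon> (\<pi> (Suc l) t) - F \<epsilon> (\<pi> l t)) + (F \<epsilon> t - F \<epsilon> (\<pi> L t))"
        using tele by simp
      moreover have "\<bar>\<Sum>l<L. F \<epsilon> (\<pi> (Suc l) t) - F \<epsilon> (\<pi> l t)\<bar> \<le> (\<Sum>l<L. \<bar>F \<epsilon> (\<pi> (Suc l) t) - F \<epsilon> (\<pi> l t)\<bar>)"
        by (rule sum_abs)
      ultimately show ?thesis by (smt (verit))
    qed
    also have "\<dots> \<le> A0 \<epsilon> + (\<Sum>l<L. Al l \<epsilon>) + R L"
    proof (intro add_mono sum_mono)
      show "\<bar>F \<epsilon> (\<pi> 0 t)\<bar> \<le> A0 \<epsilon>" unfolding A0_def F_def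
        using \<pi>(1)[OF t, of 0] Net(2)[of 0] by (intro Max_ge) auto
    next
      fix l assume "l \<in> {..<L}"
      have "F \<epsilon> (\<pi> (Suc l) t) - F \<epsilon> (\<pi> l t) = (\<Sum>j<m. \<epsilon> j * (\<psi> (\<pi> (Suc l) t) j - \<psi> (\<pi> l t) j))"
        by (simp add: F_def sum_subtractf right_diff_distrib)
      thus "\<bar>F \<epsilon> (\<pi> (Suc l) t) - F \<epsilon> (\<pi> l t)\<bar> \<le> Al l \<epsilon>" unfolding Al_def
        using Ppi[OF t, of l] finP[of l] by (intro Max_ge) force+
    next
      have "\<bar>F \<epsilon> t - F \<epsilon> (\<pi> L t)\<bar> = \<bar>\<Sum>j<m. \<epsilon> j * (\<psi> t j - \<psi> (\<pi> L t) j)\<bar>"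
        by (simp add: F_def sum_subtractf right_diff_distrib)
      also have "\<dots> \<le> (\<Sum>j<m. \<bar>\<epsilon> j * (\<psi> t j - \<psi> (\<pi> L t) j)\<bar>)" by (rule sum_abs)
      also have "\<dots> \<le> (\<Sum>j<m. q * H powr q / 2^L)"
      proof (rule sum_mono)
        fix j assume j: "j \<in> {..<m}"
        have "\<bar>\<epsilon> j * (\<psi> t j - \<psi> (\<pi> L t) j)\<bar> = \<bar>\<psi> t j - \<psi> (\<pi> L t) j\<bar>"
          using eps j by (simp add: abs_mult)
        also have "\<dots> \<le> q * H powr (q - 1) * \<bar>\<phi> t j - \<phi> (\<pi> L t) j\<bar>"
          unfolding \<psi>_def using j t q \<pi>(1)[OF t] Net(1) by (intro powr_abs_lip bnd) auto
        also have "\<dots> \<le> q * H powr (q - 1) * (H / 2^L)"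
          using \<pi>(2)[OF t] j q H by (intro mult_left_mono) auto
        also have "\<dots> = q * H powr q / 2^L"
          using H by (simp add: powr_diff field_simps)
        finally show "\<bar>\<epsilon> j * (\<psi> t j - \<psi> (\<pi> L t) j)\<bar> \<le> q * H powr q / 2^L" .
      qed
      also have "\<dots> = R L" by (simp add: R_def)
      finally show "\<bar>F \<epsilon> t - F \<epsilon> (\<pi> L t)\<bar> \<le> R L" .
    qed
    finally show ?thesis .
  qed
  have sup_le: "(SUP t\<in>T. \<bar>F \<epsilon> t\<bar>) \<le> A0 \<epsilon> + (\<Sum>l<L. Al l \<epsilon>) + R L" if e: "\<epsilon> \<in> E" for \<epsilon> L
    using point[OF e] T by (intro cSUP_least) auto
  have avgA0: "(\<Sum>\<epsilon>\<in>E. A0 \<epsilon>) / 2^m \<le> 2 * K0"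
  proof -
    have "(\<Sum>\<epsilon>\<in>E. A0 \<epsilon>) / 2^m \<le> sqrt (H powr q * S) * sqrt (2 * (3 * real n))"
      unfolding A0_def E_def
    proof (rule max_ineq)
      show "finite (Net 0)" "Net 0 \<noteq> {}" by (fact Net(2), fact NetT)
      show "sqrt (H powr q * S) \<ge> 0" using S0 by simp
      show "3 * real n > 0" using n by simp
      fix u assume u: "u \<in> Net 0"
      hence uT: "u \<in> T" using Net(1) by auto
      have "(\<Sum>j<m. (\<psi> u j)^2) \<le> (\<Sum>j<m. H powr q * \<psi> u j)"
      proof (rule sum_mono)
        fix j assume "j \<in> {..<m}"
        hence "\<psi> u j \<le> H powr q" unfolding \<psi>_def using bnd[OF uT] q by (intro powr_mono2) auto
        thus "(\<psi> u j)^2 \<le> H powr q * \<psi> u j"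
          by (simp add: power2_eq_square \<psi>_def mult_right_mono)
      qed
      also have "\<dots> \<le> H powr q * S" using Sb[OF uT] by (simp add: sum_distrib_left[symmetric] \<psi>_def mult_left_mono)
      also have "\<dots> = (sqrt (H powr q * S))^2" using S0 by simp
      finally show "(\<Sum>j<m. (\<psi> u j)^2) \<le> (sqrt (H powr q * S))^2" .
    next
      have "real (card (Net 0)) \<le> (2::real)^(2*n)" using cardNet[of 0] by (simp add: mult_2)
      hence "ln (2 * real (card (Net 0))) \<le> real (2*n) + 1" using cardNet1 by (intro ln_card_bound) auto
      thus "ln (2 * real (card (Net 0))) \<le> 3 * real n" using n by simp
    qed
    also have "\<dots> = H powr (q/2) * sqrt S * sqrt 6 * sqrt (real n)"
      using H by (simp add: real_sqrt_mult powr_half_sqrt[symmetric] powr_powr)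
    also have "\<dots> \<le> H powr (q/2) * sqrt S * (2 * q) * sqrt (real n)"
    proof -
      have "sqrt 6 \<le> sqrt (4^2)" by (intro real_sqrt_le_mono) simp
      hence "sqrt 6 \<le> 4" by simp
      hence "sqrt 6 \<le> 2 * q" using q by linarith
      thus ?thesis using S0 by (intro mult_right_mono mult_left_mono) auto
    qed
    also have "\<dots> = 2 * K0" by (simp add: K0_def mult_ac)
    finally show ?thesis .
  qed
  have num: "3 * sqrt 2 * sqrt x \<le> 5 * x" if x: "x \<ge> 1" for x :: real
  proof (rule power2_le_imp_le)
    have "(3 * sqrt 2 * sqrt x)^2 = 18 * x" using x by (simp add: power_mult_distrib)
    also have "\<dots> \<le> (5 * x)^2" using x by (simp add: power2_eq_square mult_right_mono)
    finally show "(3 * sqrt 2 * sqrt x)^2 \<le> (5 * x)^2" .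
    show "0 \<le> 5 * x" using x by simp
  qed
  have avgAl: "(\<Sum>\<epsilon>\<in>E. Al l \<epsilon>) / 2^m \<le> 5 * K0 * ((real l + 3) / 2^l)" for l
  proof -
    define \<sigma> where "\<sigma> = 3 * q * H powr (q/2) * sqrt (2*S) / 2^(Suc l)"
    define \<delta> where "\<delta> = 3 * H / 2^(Suc l)"
    have "(\<Sum>\<epsilon>\<in>E. Al l \<epsilon>) / 2^m \<le> \<sigma> * sqrt (2 * ((2 * real l + 6) * real n))"
      unfolding Al_def E_def
    proof (rule max_ineq)
      show "finite (P l)" "P l \<noteq> {}" by (fact finP, fact PT)
      show "\<sigma> \<ge> 0" using S0 q by (simp add: \<sigma>_def)
      show "(2 * real l + 6) * real n > 0" using n by simp
      fix p assume p: "p \<in> P l"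
      obtain u v where uv: "p = (u, v)" by (cases p)
      have u: "u \<in> T" and v: "v \<in> T" and d: "\<And>j. j < m \<Longrightarrow> \<bar>\<phi> u j - \<phi> v j\<bar> \<le> \<delta>"
        using p Net(1) unfolding P_def uv \<delta>_def by auto
      have "(\<Sum>j<m. (\<psi> (fst p) j - \<psi> (snd p) j)^2) \<le> (\<Sum>j<m. q^2 * \<delta>^2 * H powr (q - 2) * (\<psi> u j + \<psi> v j))"
      proof (rule sum_mono)
        fix j assume j: "j \<in> {..<m}"
        have "(\<psi> u j - \<psi> v j)^2 \<le> q^2 * (\<phi> u j - \<phi> v j)^2 * H powr (q - 2) * (\<psi> u j + \<psi> v j)"
          unfolding \<psi>_def using j q H by (intro powr_abs_sq_incr bnd u v) auto
        also have "\<dots> \<le> q^2 * \<delta>^2 * H powr (q - 2) * (\<psi> u j + \<psi> v j)"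
        proof -
          have "(\<phi> u j - \<phi> v j)^2 \<le> \<delta>^2"
            using d[of j] j by (metis abs_ge_zero lessThan_iff power2_abs power_mono)
          thus ?thesis by (intro mult_right_mono mult_left_mono) (auto simp: \<psi>_def)
        qed
        finally show "(\<psi> (fst p) j - \<psi> (snd p) j)^2 \<le> q^2 * \<delta>^2 * H powr (q - 2) * (\<psi> u j + \<psi> v j)"
          by (simp add: uv)
      qed
      also have "\<dots> = q^2 * \<delta>^2 * H powr (q - 2) * ((\<Sum>j<m. \<psi> u j) + (\<Sum>j<m. \<psi> v j))"
        by (simp only: sum.distrib[symmetric] sum_distrib_left)
      also have "\<dots> \<le> q^2 * \<delta>^2 * H powr (q - 2) * (2 * S)"
      proof (rule mult_left_mono)
        show "(\<Sum>j<m. \<psi> u j) + (\<Sum>j<m. \<psi> v j) \<le> 2 * S"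
          using Sb[OF u] Sb[OF v] unfolding \<psi>_def by linarith
        show "0 \<le> q^2 * \<delta>^2 * H powr (q - 2)" by simp
      qed
      also have "\<dots> = \<sigma>^2"
      proof -
        have "H powr q = H powr (2 + (q - 2))" by simp
        also have "\<dots> = H powr 2 * H powr (q - 2)" by (rule powr_add)
        also have "H powr 2 = H^2" using H by simp
        finally have h1: "H powr q = H^2 * H powr (q - 2)" .
        have h2: "(H powr (q/2))^2 = H powr q"
          by (simp add: power2_eq_square powr_add[symmetric])
        have "\<sigma>^2 = 9 * q^2 * (H powr (q/2))^2 * (2*S) / (2^Suc l)^2"
          using S0 by (simp add: \<sigma>_def power_mult_distrib power_divide)
        also have "\<dots> = 9 * q^2 * (H^2 * H powr (q - 2)) * (2*S) / (2^Suc l)^2"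
          by (simp only: h2 h1)
        also have "\<dots> = q^2 * \<delta>^2 * H powr (q - 2) * (2 * S)"
          by (simp add: \<delta>_def power_divide power_mult_distrib)
        finally show ?thesis by simp
      qed
      finally show "(\<Sum>j<m. (\<psi> (fst p) j - \<psi> (snd p) j)^2) \<le> \<sigma>^2" .
    next
      have cP: "real (card (P l)) \<le> (2::real)^((2*l+5)*n)"
      proof -
        have "card (P l) \<le> card (Net (Suc l) \<times> Net l)"
          unfolding P_def by (rule card_mono) (auto simp: Net(2))
        hence "real (card (P l)) \<le> real (card (Net (Suc l))) * real (card (Net l))"
          by (simp add: card_cartesian_product flip: of_nat_mult)
        also have "\<dots> \<le> 2^((Suc l + 2)*n) * 2^((l+2)*n)"
          using cardNet[of "Suc l"] cardNet[of l] by (intro mult_mono) auto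
        also have "\<dots> = 2^((2*l+5)*n)" by (simp add: power_add[symmetric] algebra_simps)
        finally show ?thesis .
      qed
      have "1 \<le> real (card (P l))" using PT[of l] finP[of l] by (simp add: Suc_le_eq card_gt_0_iff)
      hence "ln (2 * real (card (P l))) \<le> real ((2*l+5)*n) + 1" using cP by (intro ln_card_bound) auto
      also have "\<dots> \<le> (2 * real l + 6) * real n" using n by (simp add: algebra_simps)
      finally show "ln (2 * real (card (P l))) \<le> (2 * real l + 6) * real n" .
    qed
    also have "\<sigma> * sqrt (2 * ((2 * real l + 6) * real n)) = (3 * sqrt 2 * sqrt (real l + 3)) * K0 / 2^l"
    proof -
      have "sqrt (2 * ((2 * real l + 6) * real n)) = sqrt (2^2 * ((real l + 3) * real n))"
        by (simp add: algebra_simps)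
      also have "\<dots> = 2 * sqrt (real l + 3) * sqrt (real n)" by (simp add: real_sqrt_mult)
      finally show ?thesis by (simp add: \<sigma>_def K0_def real_sqrt_mult field_simps)
    qed
    also have "\<dots> \<le> (5 * (real l + 3)) * K0 / 2^l"
      using num[of "real l + 3"] K0 by (intro divide_right_mono mult_right_mono) auto
    also have "\<dots> = 5 * K0 * ((real l + 3) / 2^l)" by simp
    finally show ?thesis .
  qed
  have main: "(\<Sum>\<epsilon>\<in>E. SUP t\<in>T. \<bar>F \<epsilon> t\<bar>) / 2^m \<le> 42 * K0 + R L" for L
  proof -
    have "(\<Sum>\<epsilon>\<in>E. SUP t\<in>T. \<bar>F \<epsilon> t\<bar>) \<le> (\<Sum>\<epsilon>\<in>E. A0 \<epsilon> + (\<Sum>l<L. Al l \<epsilon>) + R L)"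
      by (rule sum_mono) (rule sup_le)
    also have "\<dots> = (\<Sum>\<epsilon>\<in>E. A0 \<epsilon>) + (\<Sum>l<L. \<Sum>\<epsilon>\<in>E. Al l \<epsilon>) + 2^m * R L"
      by (simp add: sum.distrib cE sum.swap[of _ E])
    finally have le: "(\<Sum>\<epsilon>\<in>E. SUP t\<in>T. \<bar>F \<epsilon> t\<bar>) \<le> (\<Sum>\<epsilon>\<in>E. A0 \<epsilon>) + (\<Sum>l<L. \<Sum>\<epsilon>\<in>E. Al l \<epsilon>) + 2^m * R L" .
    have d: "(\<Sum>l<L. \<Sum>\<epsilon>\<in>E. Al l \<epsilon>) / 2^m = (\<Sum>l<L. (\<Sum>\<epsilon>\<in>E. Al l \<epsilon>) / 2^m)"
      by (rule sum_divide_distrib)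
    have e: "((\<Sum>\<epsilon>\<in>E. A0 \<epsilon>) + (\<Sum>l<L. \<Sum>\<epsilon>\<in>E. Al l \<epsilon>) + 2^m * R L) / 2^m
            = (\<Sum>\<epsilon>\<in>E. A0 \<epsilon>) / 2^m + (\<Sum>l<L. \<Sum>\<epsilon>\<in>E. Al l \<epsilon>) / 2^m + R L"
      by (simp add: add_divide_distrib)
    have "(\<Sum>\<epsilon>\<in>E. SUP t\<in>T. \<bar>F \<epsilon> t\<bar>) / 2^m \<le> ((\<Sum>\<epsilon>\<in>E. A0 \<epsilon>) + (\<Sum>l<L. \<Sum>\<epsilon>\<in>E. Al l \<epsilon>) + 2^m * R L) / 2^m"
      using le by (rule divide_right_mono) simp
    also have "\<dots> = (\<Sum>\<epsilon>\<in>E. A0 \<epsilon>) / 2^m + (\<Sum>l<L. (\<Sum>\<epsilon>\<in>E. Al l \<epsilon>) / 2^m) + R L"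
      by (simp only: e d)
    also have "\<dots> \<le> 2 * K0 + (\<Sum>l<L. 5 * K0 * ((real l + 3) / 2^l)) + R L"
      by (intro add_mono avgA0 sum_mono avgAl order_refl)
    also have "(\<Sum>l<L. 5 * K0 * ((real l + 3) / 2^l)) = 5 * K0 * (8 - (real L + 4) / 2^L * 2)"
      by (simp only: sum_distrib_left[symmetric] telescope_weights)
    also have "\<dots> \<le> 5 * K0 * 8" using K0 by (intro mult_left_mono) auto
    finally show ?thesis by simp
  qed
  have main2: "(\<Sum>\<epsilon>\<in>E. SUP t\<in>T. \<bar>F \<epsilon> t\<bar>) / 2^m \<le> 42 * K0"
  proof (rule field_le_epsilon)
    fix e :: real assume e: "e > 0"
    define C where "C = real m * (q * H powr q)"
    have C: "C \<ge> 0" using q by (simp add: C_def)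
    obtain L where L: "C / e < 2^L" using real_arch_pow[of 2 "C / e"] by auto
    hence "C < e * 2^L" using e by (simp add: field_simps)
    hence "R L \<le> e" unfolding R_def C_def[symmetric] by (simp add: field_simps)
    thus "(\<Sum>\<epsilon>\<in>E. SUP t\<in>T. \<bar>F \<epsilon> t\<bar>) / 2^m \<le> 42 * K0 + e" using main[of L] by linarith
  qed
  also have "42 * K0 \<le> 50 * q * H powr (q / 2) * sqrt (real n) * sqrt S"
    using K0 by (simp add: K0_def mult_ac)
  finally show ?thesis unfolding F_def \<psi>_def E_def .
qed

lemma lborel_affine_preimage:
  fixes A :: "real set" and c r :: real
  assumes A: "A \<in> sets borel" and r: "r > 0"
  shows "emeasure lborel {t. (t - c) / r \<in> A} = ennreal r * emeasure lborel A"
proof -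
  define S where "S = {t. (t - c) / r \<in> A}"
  have mS: "S \<in> sets borel"
  proof -
    have "(\<lambda>t::real. (t - c) / r) \<in> borel_measurable borel" by measurable
    from measurable_sets[OF this A] show ?thesis by (simp add: S_def vimage_def)
  qed
  define D where "D = distr lborel borel (\<lambda>x. c + r * x)"
  have eq: "lborel = density D (\<lambda>_. ennreal \<bar>r\<bar>)"
    unfolding D_def using r by (intro lborel_real_affine) simp
  have "emeasure lborel S = emeasure (density D (\<lambda>_. ennreal \<bar>r\<bar>)) S"
    by (rule arg_cong[where f="\<lambda>M. emeasure M S", OF eq])
  also have "\<dots> = ennreal \<bar>r\<bar> * emeasure D S"
    using mS by (intro emeasure_density_const) (simp add: D_def)
  also have "emeasure D S = emeasure lborel ((\<lambda>x. c + r * x) -` S \<inter> space lborel)"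
    unfolding D_def using mS by (intro emeasure_distr) auto
  also have "(\<lambda>x. c + r * x) -` S \<inter> space lborel = A"
    using r by (auto simp: S_def)
  finally show ?thesis using r by (simp add: S_def)
qed

lemma PiM_affine:
  fixes J :: "nat set" and p :: "nat \<Rightarrow> real" and r :: real
  assumes J: "finite J" and r: "r > 0" and U: "U \<in> sets (PiM J (\<lambda>_. lborel :: real measure))"
  shows "emeasure (PiM J (\<lambda>_. lborel)) {b \<in> space (PiM J (\<lambda>_. lborel)). restrict (\<lambda>k. (b k - p k) / r) J \<in> U}
         = ennreal (r ^ card J) * emeasure (PiM J (\<lambda>_. lborel :: real measure)) U"
proof -
  interpret product_sigma_finite "\<lambda>_. lborel :: real measure" by standard
  define M where "M = PiM J (\<lambda>_. lborel :: real measure)"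
  define g where "g = (\<lambda>b::nat \<Rightarrow> real. restrict (\<lambda>k. (b k - p k) / r) J)"
  define c where "c = ennreal (1 / r ^ card J)"
  have g: "g \<in> measurable M M" unfolding g_def M_def by measurable
  have eq: "density (distr M M g) (\<lambda>_. c) = M"
    unfolding M_def
  proof (rule PiM_eqI[OF J])
    show "sets (density (distr (Pi\<^sub>M J (\<lambda>_. lborel)) (Pi\<^sub>M J (\<lambda>_. lborel)) g) (\<lambda>_. c)) = sets (Pi\<^sub>M J (\<lambda>_. lborel))"
      by simp
    fix A :: "nat \<Rightarrow> real set" assume A: "\<And>i. i \<in> J \<Longrightarrow> A i \<in> sets lborel"
    have box: "Pi\<^sub>E J A \<in> sets M" unfolding M_def using A J by (intro sets_PiM_I_finite) auto
    have pre: "g -` Pi\<^sub>E J A \<inter> space M = Pi\<^sub>E J (\<lambda>k. {t. (t - p k) / r \<in> A k})"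
      by (auto simp: g_def M_def space_PiM PiE_iff restrict_def extensional_def)
    have "emeasure (density (distr M M g) (\<lambda>_. c)) (Pi\<^sub>E J A) = c * emeasure (distr M M g) (Pi\<^sub>E J A)"
      using box by (intro emeasure_density_const) simp
    also have "emeasure (distr M M g) (Pi\<^sub>E J A) = emeasure M (g -` Pi\<^sub>E J A \<inter> space M)"
      using g box by (intro emeasure_distr) auto
    also have "\<dots> = (\<Prod>k\<in>J. emeasure lborel {t. (t - p k) / r \<in> A k})"
    proof -
      have "{t. (t - p k) / r \<in> A k} \<in> sets lborel" if "k \<in> J" for k
      proof -
        have "(\<lambda>t::real. (t - p k) / r) \<in> borel_measurable borel" by measurable
        from measurable_sets[OF this, of "A k"] A[OF that] show ?thesis by (simp add: vimage_def)
      qed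
      thus ?thesis unfolding pre unfolding M_def using J by (intro emeasure_PiM) auto
    qed
    also have "\<dots> = (\<Prod>k\<in>J. ennreal r * emeasure lborel (A k))"
      using A r by (intro prod.cong refl lborel_affine_preimage) auto
    also have "\<dots> = ennreal (r ^ card J) * (\<Prod>k\<in>J. emeasure lborel (A k))"
      using r by (simp add: prod.distrib ennreal_power)
    also have "c * (ennreal (r ^ card J) * (\<Prod>k\<in>J. emeasure lborel (A k))) = (\<Prod>k\<in>J. emeasure lborel (A k))"
      using r by (simp add: c_def mult.assoc[symmetric] ennreal_mult[symmetric])
    finally show "emeasure (density (distr (Pi\<^sub>M J (\<lambda>_. lborel)) (Pi\<^sub>M J (\<lambda>_. lborel)) g) (\<lambda>_. c)) (Pi\<^sub>E J A) = (\<Prod>k\<in>J. emeasure lborel (A k))"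
      unfolding M_def .
  qed
  have "emeasure M {b \<in> space M. g b \<in> U} = emeasure (distr M M g) U"
    using g U by (subst emeasure_distr) (auto simp: M_def vimage_def Int_def conj_commute)
  moreover have "emeasure M U = c * emeasure (distr M M g) U"
    using U by (subst (1) eq[symmetric]) (simp add: emeasure_density_const M_def)
  ultimately have "ennreal (r ^ card J) * emeasure M U = emeasure M {b \<in> space M. g b \<in> U}"
    using r by (simp add: c_def mult.assoc[symmetric] ennreal_mult[symmetric])
  thus ?thesis by (simp add: M_def g_def)
qed


definition Uball :: "nat set \<Rightarrow> nat \<Rightarrow> (nat \<Rightarrow> nat \<Rightarrow> real) \<Rightarrow> (nat \<Rightarrow> real) \<Rightarrow> real \<Rightarrow> (nat \<Rightarrow> real) set" where
  "Uball J m e p r = {a \<in> space (PiM J (\<lambda>_. lborel :: real measure)). \<forall>j<m. \<bar>\<Sum>k\<in>J. (a k - p k) * e k j\<bar> < r}"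

lemma Uball_sets: "finite J \<Longrightarrow> Uball J m e p r \<in> sets (PiM J (\<lambda>_. lborel :: real measure))"
  unfolding Uball_def by measurable

lemma Uball_scale:
  assumes J: "finite J" and r: "r > 0"
  shows "emeasure (PiM J (\<lambda>_. lborel)) (Uball J m e p r) = ennreal (r ^ card J) * emeasure (PiM J (\<lambda>_. lborel :: real measure)) (Uball J m e (\<lambda>_. 0) 1)"
proof -
  have "Uball J m e p r = {b \<in> space (PiM J (\<lambda>_. lborel)). restrict (\<lambda>k. (b k - p k) / r) J \<in> Uball J m e (\<lambda>_. 0) 1}"
  proof -
    have "(\<Sum>k\<in>J. (restrict (\<lambda>k. (b k - p k) / r) J k - 0) * e k j) = (\<Sum>k\<in>J. (b k - p k) * e k j) / r" for b j
      by (simp add: sum_divide_distrib)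
    moreover have "restrict (\<lambda>k. (b k - p k) / r) J \<in> space (PiM J (\<lambda>_. lborel :: real measure))" for b
      by (simp add: space_PiM)
    ultimately show ?thesis using r unfolding Uball_def by (auto simp: abs_divide)
  qed
  moreover note PiM_affine[OF J r Uball_sets[OF J, of m e "\<lambda>_. 0" 1], where p=p]
  ultimately show ?thesis by simp
qed

lemma packing_card:
  fixes J :: "nat set" and e :: "nat \<Rightarrow> nat \<Rightarrow> real" and P :: "(nat \<Rightarrow> real) set"
  assumes J: "finite J" "J \<noteq> {}" "J \<subseteq> {..<m}"
    and dirac: "\<And>k k'. k \<in> J \<Longrightarrow> k' \<in> J \<Longrightarrow> e k k' = (if k = k' then 1 else 0)"
    and P: "P \<subseteq> PiE J (\<lambda>_. UNIV)" "finite P"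
    and bnd: "\<And>a j. a \<in> P \<Longrightarrow> j < m \<Longrightarrow> \<bar>\<Sum>k\<in>J. a k * e k j\<bar> \<le> H"
    and sep: "\<And>a b. a \<in> P \<Longrightarrow> b \<in> P \<Longrightarrow> a \<noteq> b \<Longrightarrow> \<exists>j<m. \<delta> \<le> \<bar>\<Sum>k\<in>J. (a k - b k) * e k j\<bar>"
    and \<delta>: "\<delta> > 0" and H: "H \<ge> 0"
  shows "real (card P) \<le> (1 + 2 * H / \<delta>) ^ card J"
proof -
  interpret product_sigma_finite "\<lambda>_. lborel :: real measure" by standard
  define M where "M = PiM J (\<lambda>_. lborel :: real measure)"
  define n where "n = card J"
  define v where "v = emeasure M (Uball J m e (\<lambda>_. 0) 1)"
  have spM: "space M = PiE J (\<lambda>_. UNIV)" by (simp add: M_def space_PiM)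
  have v_fin: "v < \<infinity>"
  proof -
    have "Uball J m e (\<lambda>_. 0) 1 \<subseteq> PiE J (\<lambda>_. {-1<..<1})"
    proof
      fix a assume a: "a \<in> Uball J m e (\<lambda>_. 0) 1"
      have "a k \<in> {-1<..<1}" if k: "k \<in> J" for k
      proof -
        have "(\<Sum>k'\<in>J. (a k' - 0) * e k' k) = (\<Sum>k'\<in>J. if k' = k then a k' else 0)"
          using k by (intro sum.cong refl) (auto simp: dirac)
        also have "\<dots> = a k" using J k by simp
        finally have "(\<Sum>k'\<in>J. (a k' - 0) * e k' k) = a k" .
        moreover have "k < m" using J k by auto
        ultimately show ?thesis using a by (force simp: Uball_def)
      qed
      thus "a \<in> PiE J (\<lambda>_. {-1<..<1})" using a by (auto simp: Uball_def space_PiM PiE_iff)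
    qed
    hence "v \<le> emeasure M (PiE J (\<lambda>_. {-1<..<1}))"
      unfolding v_def M_def using J by (intro emeasure_mono sets_PiM_I_finite) auto
    also have "\<dots> = (\<Prod>k\<in>J. emeasure lborel {-1<..<(1::real)})"
      unfolding M_def using J by (intro emeasure_PiM) auto
    also have "\<dots> = ennreal (2 ^ card J)" by simp (metis ennreal_numeral ennreal_power zero_le_numeral)
    also have "\<dots> < \<infinity>" by simp
    finally show ?thesis .
  qed
  have v_pos: "v > 0"
  proof -
    define Tot where "Tot = (\<Sum>k\<in>J. \<Sum>j<m. \<bar>e k j\<bar>)"
    define \<rho> where "\<rho> = 1 / (1 + Tot)"
    have Tot: "Tot \<ge> 0" unfolding Tot_def by (intro sum_nonneg) auto
    have \<rho>: "\<rho> > 0" "\<rho> * Tot < 1" using Tot by (auto simp: \<rho>_def field_simps)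
    have "PiE J (\<lambda>_. {-\<rho><..<\<rho>}) \<subseteq> Uball J m e (\<lambda>_. 0) 1"
    proof
      fix a assume a: "a \<in> PiE J (\<lambda>_. {-\<rho><..<\<rho>})"
      have "\<bar>\<Sum>k\<in>J. (a k - 0) * e k j\<bar> < 1" if j: "j < m" for j
      proof -
        have "\<bar>\<Sum>k\<in>J. (a k - 0) * e k j\<bar> \<le> (\<Sum>k\<in>J. \<bar>a k\<bar> * \<bar>e k j\<bar>)"
          by (rule order_trans[OF sum_abs]) (simp add: abs_mult)
        also have "\<dots> \<le> (\<Sum>k\<in>J. \<rho> * \<bar>e k j\<bar>)"
          using a by (intro sum_mono mult_right_mono) (auto simp: PiE_iff abs_less_iff less_imp_le)
        also have "\<dots> \<le> \<rho> * Tot"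
        proof -
          have "(\<Sum>k\<in>J. \<bar>e k j\<bar>) \<le> Tot" unfolding Tot_def
            using j by (intro sum_mono member_le_sum) auto
          thus ?thesis using \<rho> by (simp add: sum_distrib_left[symmetric] mult_left_mono)
        qed
        finally show ?thesis using \<rho> by simp
      qed
      thus "a \<in> Uball J m e (\<lambda>_. 0) 1" using a by (auto simp: Uball_def space_PiM PiE_iff)
    qed
    hence "emeasure M (PiE J (\<lambda>_. {-\<rho><..<\<rho>})) \<le> v"
      unfolding v_def M_def using J by (intro emeasure_mono Uball_sets) auto
    moreover have "emeasure M (PiE J (\<lambda>_. {-\<rho><..<\<rho>})) = (\<Prod>k\<in>J. emeasure lborel {-\<rho><..<\<rho>})"
      unfolding M_def using J by (intro emeasure_PiM) auto
    moreover have "(\<Prod>k\<in>J. emeasure lborel {-\<rho><..<\<rho>}) = ennreal ((2*\<rho>) ^ card J)"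
      using \<rho> by (simp add: ennreal_power)
    moreover have "ennreal ((2*\<rho>) ^ card J) > 0" using \<rho> by simp
    ultimately show ?thesis by (metis order_less_le_trans)
  qed
  obtain v' where v': "v = ennreal v'" "v' > 0"
    using v_fin v_pos by (cases v) auto
  have disj: "disjoint_family_on (\<lambda>a. Uball J m e a (\<delta>/2)) P"
    unfolding disjoint_family_on_def
  proof (intro ballI impI)
    fix a b assume ab: "a \<in> P" "b \<in> P" "a \<noteq> b"
    obtain j where j: "j < m" "\<delta> \<le> \<bar>\<Sum>k\<in>J. (a k - b k) * e k j\<bar>" using sep[OF ab] by auto
    show "Uball J m e a (\<delta>/2) \<inter> Uball J m e b (\<delta>/2) = {}"
    proof (rule ccontr)
      assume "Uball J m e a (\<delta>/2) \<inter> Uball J m e b (\<delta>/2) \<noteq> {}"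
      then obtain c where c1: "\<bar>\<Sum>k\<in>J. (c k - a k) * e k j\<bar> < \<delta>/2"
        and c2: "\<bar>\<Sum>k\<in>J. (c k - b k) * e k j\<bar> < \<delta>/2"
        using j(1) unfolding Uball_def by blast
      have "(\<Sum>k\<in>J. (a k - b k) * e k j) = (\<Sum>k\<in>J. (c k - b k) * e k j) - (\<Sum>k\<in>J. (c k - a k) * e k j)"
        by (simp add: sum_subtractf[symmetric] algebra_simps)
      hence "\<bar>\<Sum>k\<in>J. (a k - b k) * e k j\<bar> < \<delta>" using c1 c2 by linarith
      thus False using j by simp
    qed
  qed
  have sub: "(\<Union>a\<in>P. Uball J m e a (\<delta>/2)) \<subseteq> Uball J m e (\<lambda>_. 0) (H + \<delta>/2)"
  proof safe
    fix a c assume a: "a \<in> P" and c: "c \<in> Uball J m e a (\<delta>/2)"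
    have "\<bar>\<Sum>k\<in>J. (c k - 0) * e k j\<bar> < H + \<delta>/2" if j: "j < m" for j
    proof -
      have "(\<Sum>k\<in>J. (c k - 0) * e k j) = (\<Sum>k\<in>J. (c k - a k) * e k j) + (\<Sum>k\<in>J. a k * e k j)"
        by (simp add: sum.distrib[symmetric] algebra_simps)
      moreover have "\<bar>\<Sum>k\<in>J. (c k - a k) * e k j\<bar> < \<delta>/2" using c j by (auto simp: Uball_def)
      moreover have "\<bar>\<Sum>k\<in>J. a k * e k j\<bar> \<le> H" using bnd[OF a j] .
      ultimately show ?thesis by linarith
    qed
    thus "c \<in> Uball J m e (\<lambda>_. 0) (H + \<delta>/2)" using c by (auto simp: Uball_def)
  qed
  have "(\<Sum>a\<in>P. emeasure M (Uball J m e a (\<delta>/2))) = emeasure M (\<Union>a\<in>P. Uball J m e a (\<delta>/2))"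
    unfolding M_def using J P disj by (intro sum_emeasure) (auto intro: Uball_sets)
  also have "\<dots> \<le> emeasure M (Uball J m e (\<lambda>_. 0) (H + \<delta>/2))"
    unfolding M_def using sub J by (intro emeasure_mono Uball_sets) auto
  also have "\<dots> = ennreal ((H + \<delta>/2) ^ n) * v"
    unfolding M_def v_def n_def using J \<delta> H by (intro Uball_scale) auto
  finally have "(\<Sum>a\<in>P. emeasure M (Uball J m e a (\<delta>/2))) \<le> ennreal ((H + \<delta>/2) ^ n) * v" .
  moreover have "(\<Sum>a\<in>P. emeasure M (Uball J m e a (\<delta>/2))) = (\<Sum>a\<in>P. ennreal ((\<delta>/2) ^ n) * v)"
    unfolding M_def v_def n_def using J \<delta> by (intro sum.cong refl Uball_scale) auto
  ultimately have "ennreal (real (card P) * (\<delta>/2) ^ n * v') \<le> ennreal ((H + \<delta>/2) ^ n * v')"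
    using v' \<delta> H by (simp add: ennreal_mult[symmetric] ennreal_of_nat_eq_real_of_nat mult.assoc)
  hence "real (card P) * (\<delta>/2) ^ n * v' \<le> (H + \<delta>/2) ^ n * v'"
    using v' \<delta> H by (subst (asm) ennreal_le_iff) auto
  hence "real (card P) * (\<delta>/2) ^ n \<le> (H + \<delta>/2) ^ n" using v' by simp
  hence "real (card P) \<le> (H + \<delta>/2) ^ n / (\<delta>/2) ^ n" using \<delta> by (simp add: pos_le_divide_eq)
  also have "(H + \<delta>/2) ^ n / (\<delta>/2) ^ n = ((H + \<delta>/2) / (\<delta>/2)) ^ n"
    by (rule power_divide[symmetric])
  also have "(H + \<delta>/2) / (\<delta>/2) = 1 + 2 * H / \<delta>"
    using \<delta> by (simp add: field_simps)
  finally show ?thesis by (simp add: n_def)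
qed


lemma cover_exists:
  fixes J :: "nat set" and e :: "nat \<Rightarrow> nat \<Rightarrow> real" and Y :: "(nat \<Rightarrow> real) set"
  assumes J: "finite J" "J \<subseteq> {..<m}"
    and dirac: "\<And>k k'. k \<in> J \<Longrightarrow> k' \<in> J \<Longrightarrow> e k k' = (if k = k' then 1 else 0)"
    and Y: "Y \<subseteq> PiE J (\<lambda>_. UNIV)"
    and bnd: "\<And>a j. a \<in> Y \<Longrightarrow> j < m \<Longrightarrow> \<bar>\<Sum>k\<in>J. a k * e k j\<bar> \<le> H"
    and \<delta>: "\<delta> > 0" and H: "H \<ge> 0"
  shows "\<exists>Net\<subseteq>Y. finite Net \<and> real (card Net) \<le> (1 + 2 * H / \<delta>) ^ card J \<and>
           (\<forall>a\<in>Y. \<exists>b\<in>Net. \<forall>j<m. \<bar>\<Sum>k\<in>J. (a k - b k) * e k j\<bar> \<le> \<delta>)"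
proof (cases "J = {}")
  case True
  have Ysub: "Y \<subseteq> {\<lambda>_. undefined}" using Y True by auto
  hence fY: "finite Y" by (rule finite_subset) simp
  have "card Y \<le> card {\<lambda>_::nat. undefined::real}" using Ysub by (intro card_mono) auto
  hence "real (card Y) \<le> (1 + 2 * H / \<delta>) ^ card J" using True by simp
  moreover have "\<forall>a\<in>Y. \<exists>b\<in>Y. \<forall>j<m. \<bar>\<Sum>k\<in>J. (a k - b k) * e k j\<bar> \<le> \<delta>"
    using True \<delta> by auto
  ultimately show ?thesis using fY by blast
next
  case False
  define sepP where "sepP = (\<lambda>Q. Q \<subseteq> Y \<and> finite Q \<and> (\<forall>a\<in>Q. \<forall>b\<in>Q. a \<noteq> b \<longrightarrow> (\<exists>j<m. \<delta> \<le> \<bar>\<Sum>k\<in>J. (a k - b k) * e k j\<bar>)))"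
  define B where "B = nat \<lceil>(1 + 2 * H / \<delta>) ^ card J\<rceil>"
  have cardB: "real (card Q) \<le> (1 + 2 * H / \<delta>) ^ card J" if "sepP Q" for Q
    using that unfolding sepP_def
    by (intro packing_card[OF J(1) False J(2) dirac, of Q H \<delta>]) (use Y bnd \<delta> H in auto)
  have cB: "card Q \<le> B" if "sepP Q" for Q
  proof -
    have "real (card Q) \<le> real_of_int \<lceil>(1 + 2 * H / \<delta>) ^ card J\<rceil>"
      using cardB[OF that] by linarith
    thus ?thesis unfolding B_def by linarith
  qed
  have "\<exists>k. (\<exists>Q. sepP Q \<and> card Q = k) \<and> (\<forall>y. (\<exists>Q. sepP Q \<and> card Q = y) \<longrightarrow> y \<le> k)"
  proof (rule Nat.ex_has_greatest_nat[of _ 0 B])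
    show "\<exists>Q. sepP Q \<and> card Q = 0" by (rule exI[of _ "{}"]) (simp add: sepP_def)
    show "\<forall>y. (\<exists>Q. sepP Q \<and> card Q = y) \<longrightarrow> y \<le> B" using cB by blast
  qed
  then obtain Q where Q: "sepP Q" and Qmax: "\<And>Q'. sepP Q' \<Longrightarrow> card Q' \<le> card Q" by blast
  have sym: "\<bar>\<Sum>k\<in>J. (b k - a k) * e k j\<bar> = \<bar>\<Sum>k\<in>J. (a k - b k) * e k j\<bar>" for a b :: "nat \<Rightarrow> real" and j
  proof -
    have "(\<Sum>k\<in>J. (b k - a k) * e k j) = - (\<Sum>k\<in>J. (a k - b k) * e k j)"
      by (simp add: sum_negf[symmetric] algebra_simps)
    thus ?thesis by simp
  qed
  have net: "\<exists>b\<in>Q. \<forall>j<m. \<bar>\<Sum>k\<in>J. (a k - b k) * e k j\<bar> \<le> \<delta>" if a: "a \<in> Y" for a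
  proof (rule ccontr)
    assume na: "\<not> ?thesis"
    hence far: "\<forall>b\<in>Q. \<exists>j<m. \<delta> \<le> \<bar>\<Sum>k\<in>J. (a k - b k) * e k j\<bar>" by (fastforce simp: not_le intro: less_imp_le)
    have aQ: "a \<notin> Q" using na \<delta> by auto
    have "sepP (insert a Q)" using Q a far sym unfolding sepP_def by (auto; metis)
    hence "card (insert a Q) \<le> card Q" by (rule Qmax)
    moreover have "card (insert a Q) = Suc (card Q)" using Q aQ unfolding sepP_def by simp
    ultimately show False by simp
  qed
  show ?thesis using Q cardB[OF Q] net unfolding sepP_def by blast
qed

lemma fsum_apply: "(\<Sum>a\<in>A. (f a :: 'x \<Rightarrow> real)) y = (\<Sum>a\<in>A. f a y)"
  by (induction A rule: infinite_finite_induct) (auto simp: func_plus func_zero)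

lemma main_bound:
  fixes \<Omega> :: "(nat \<Rightarrow> real) set" and \<mu> :: "(nat \<Rightarrow> real) measure"
    and X :: "((nat \<Rightarrow> real) \<Rightarrow> real) set" and N m :: nat and q H :: real and x :: "nat \<Rightarrow> (nat \<Rightarrow> real)"
  assumes cpt: "compact \<Omega>"
    and XC: "X \<subseteq> C_space \<Omega>" and subsp: "module.subspace fscale X"
    and fin: "\<exists>B. finite B \<and> module.span fscale B = X" and dimX: "vector_space.dim fscale X = N"
    and q: "2 \<le> q" and H: "H > 0" and nik: "\<forall>f\<in>X. sup_norm \<Omega> f \<le> H * Lq_norm \<mu> q f"
    and xs: "\<forall>j<m. x j \<in> \<Omega>"
  shows "(\<Sum>\<epsilon>\<in>({..<m} \<rightarrow>\<^sub>E {-1, 1::real}).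
          (SUP f\<in>{f\<in>X. Lq_norm \<mu> q f \<le> 1}. \<bar>\<Sum>j<m. \<epsilon> j * \<bar>f (x j)\<bar> powr q\<bar>)) / 2 ^ m
      \<le> 50 * q * H powr (q / 2) * sqrt (real N) *
         sqrt (SUP h\<in>{h\<in>X. Lq_norm \<mu> q h \<le> 1}. (\<Sum>j<m. \<bar>h (x j)\<bar> powr q))"
proof -
  interpret V: vector_space "fscale :: real \<Rightarrow> ((nat \<Rightarrow> real) \<Rightarrow> real) \<Rightarrow> ((nat \<Rightarrow> real) \<Rightarrow> real)"
    by (rule vector_space_fscale)
  define B' where "B' = {f\<in>X. Lq_norm \<mu> q f \<le> 1}"
  define S where "S = (SUP h\<in>B'. (\<Sum>j<m. \<bar>h (x j)\<bar> powr q))"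
  have sub: "V.subspace X" using subsp .
  have X0: "0 \<in> X" using V.subspace_0[OF sub] .
  have Lq0: "Lq_norm \<mu> q 0 = 0" using q by (simp add: Lq_norm_def func_zero)
  have B'0: "0 \<in> B'" using X0 Lq0 by (simp add: B'_def)
  have bndf: "\<bar>f (x j)\<bar> \<le> H" if f: "f \<in> B'" and j: "j < m" for f j
  proof -
    have fX: "f \<in> X" using f by (simp add: B'_def)
    have "continuous_on \<Omega> f" using XC fX by (auto simp: C_space_def)
    hence "continuous_on \<Omega> (\<lambda>y. \<bar>f y\<bar>)" by (intro continuous_intros)
    hence "compact ((\<lambda>y. \<bar>f y\<bar>) ` \<Omega>)" using cpt by (rule compact_continuous_image)
    hence "bdd_above ((\<lambda>y. \<bar>f y\<bar>) ` \<Omega>)" by (intro bounded_imp_bdd_above compact_imp_bounded)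
    hence "\<bar>f (x j)\<bar> \<le> sup_norm \<Omega> f" unfolding sup_norm_def using xs j by (intro cSUP_upper) auto
    also have "\<dots> \<le> H * Lq_norm \<mu> q f" using nik fX by auto
    also have "\<dots> \<le> H * 1" using f H by (intro mult_left_mono) (auto simp: B'_def)
    finally show ?thesis by simp
  qed
  have bddS: "bdd_above ((\<lambda>h. \<Sum>j<m. \<bar>h (x j)\<bar> powr q) ` B')"
  proof (rule bdd_aboveI2)
    fix h assume h: "h \<in> B'"
    show "(\<Sum>j<m. \<bar>h (x j)\<bar> powr q) \<le> (\<Sum>j<m. H powr q)"
      using bndf[OF h] q by (intro sum_mono powr_mono2) auto
  qed
  have Sb: "(\<Sum>j<m. \<bar>f (x j)\<bar> powr q) \<le> S" if "f \<in> B'" for f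
    unfolding S_def by (rule cSUP_upper[OF that bddS])
  have S0: "S \<ge> 0" using Sb[OF B'0] by (smt (verit) powr_ge_zero sum_nonneg)
  \<comment> \<open>a minimal determining set of sample points\<close>
  define PJ where "PJ = (\<lambda>J. J \<subseteq> {..<m} \<and> (\<forall>f\<in>X. (\<forall>j\<in>J. f (x j) = 0) \<longrightarrow> (\<forall>j<m. f (x j) = 0)))"
  have "PJ {..<m}" by (auto simp: PJ_def)
  then obtain J where PJJ: "PJ J" and Jmin: "\<And>J'. PJ J' \<Longrightarrow> card J \<le> card J'"
    using ex_has_least_nat[of PJ "{..<m}" card] by blast
  have Jsub: "J \<subseteq> {..<m}" and Jdet: "\<And>f j. f \<in> X \<Longrightarrow> (\<forall>j\<in>J. f (x j) = 0) \<Longrightarrow> j < m \<Longrightarrow> f (x j) = 0"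
    using PJJ by (auto simp: PJ_def)
  have finJ: "finite J" using Jsub finite_subset by blast
  have exd: "\<exists>g\<in>X. g (x k) = 1 \<and> (\<forall>j\<in>J. j \<noteq> k \<longrightarrow> g (x j) = 0)" if k: "k \<in> J" for k
  proof -
    have "card (J - {k}) < card J" using finJ k by (rule card_Diff1_less)
    hence "\<not> PJ (J - {k})" using Jmin by (meson not_le)
    then obtain f where fX: "f \<in> X" and f0: "\<forall>j\<in>J - {k}. f (x j) = 0" and f1: "\<exists>j<m. f (x j) \<noteq> 0"
      using Jsub unfolding PJ_def by blast
    have fk: "f (x k) \<noteq> 0"
    proof
      assume "f (x k) = 0"
      hence "\<forall>j\<in>J. f (x j) = 0" using f0 by blast
      thus False using Jdet[OF fX] f1 by blast
    qed
    define g where "g = fscale (1 / f (x k)) f"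
    have "g \<in> X" unfolding g_def using V.subspace_scale[OF sub fX] .
    moreover have "g (x k) = 1" using fk by (simp add: g_def fscale_def)
    moreover have "\<forall>j\<in>J. j \<noteq> k \<longrightarrow> g (x j) = 0" using f0 by (simp add: g_def fscale_def)
    ultimately show ?thesis by blast
  qed
  then obtain d where d: "\<And>k. k \<in> J \<Longrightarrow> d k \<in> X" "\<And>k. k \<in> J \<Longrightarrow> d k (x k) = 1"
    "\<And>k j. k \<in> J \<Longrightarrow> j \<in> J \<Longrightarrow> j \<noteq> k \<Longrightarrow> d k (x j) = 0"
    by metis
  define e where "e = (\<lambda>k j. d k (x j))"
  have dirac: "e k k' = (if k = k' then 1 else 0)" if "k \<in> J" "k' \<in> J" for k k'
    using d that by (auto simp: e_def)
  have cardJ: "card J \<le> N"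
  proof -
    obtain Bs where Bs: "Bs \<subseteq> X" "V.independent Bs" "X \<subseteq> V.span Bs" "card Bs = V.dim X"
      by (rule V.basis_exists)
    obtain B0 where B0: "finite B0" "V.span B0 = X" using fin by blast
    have finBs: "finite Bs" using V.independent_span_bound[OF B0(1) Bs(2)] Bs(1) B0(2) by auto
    have injd: "inj_on d J"
    proof (rule inj_onI)
      fix k k' assume kk: "k \<in> J" "k' \<in> J" "d k = d k'"
      show "k = k'"
      proof (rule ccontr)
        assume "k \<noteq> k'"
        hence "d k' (x k) = 0" using d(3)[OF kk(2) kk(1)] by simp
        moreover have "d k (x k) = 1" using d(2)[OF kk(1)] .
        ultimately show False using kk(3) by simp
      qed
    qed
    have indep: "V.independent (d ` J)"
      unfolding V.dependent_explicit
    proof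
      assume "\<exists>t u. finite t \<and> t \<subseteq> d ` J \<and> (\<Sum>v\<in>t. fscale (u v) v) = 0 \<and> (\<exists>v\<in>t. u v \<noteq> 0)"
      then obtain t u v0 where t: "finite t" "t \<subseteq> d ` J" "(\<Sum>v\<in>t. fscale (u v) v) = 0"
        and v0: "v0 \<in> t" "u v0 \<noteq> 0" by blast
      obtain k0 where k0: "k0 \<in> J" "v0 = d k0" using t(2) v0(1) by blast
      have "0 = (\<Sum>v\<in>t. fscale (u v) v) (x k0)" using t(3) by (simp add: func_zero)
      also have "\<dots> = (\<Sum>v\<in>t. u v * v (x k0))" by (simp add: fsum_apply fscale_def)
      also have "\<dots> = u v0 * v0 (x k0) + (\<Sum>v\<in>t - {v0}. u v * v (x k0))"
        using t(1) v0(1) by (rule sum.remove)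
      also have "(\<Sum>v\<in>t - {v0}. u v * v (x k0)) = 0"
      proof (rule sum.neutral, rule ballI)
        fix v assume v: "v \<in> t - {v0}"
        then obtain k where k: "k \<in> J" "v = d k" using t(2) by blast
        have "k \<noteq> k0" using v k k0 by auto
        thus "u v * v (x k0) = 0" using d(3)[OF k(1) k0(1)] k by simp
      qed
      finally show False using v0 k0 d(2) by simp
    qed
    have "card (d ` J) \<le> card Bs"
      using V.independent_span_bound[OF finBs indep] d(1) Bs(3) by blast
    thus ?thesis using injd Bs(4) dimX by (simp add: card_image)
  qed
  have repr: "f (x j) = (\<Sum>k\<in>J. f (x k) * e k j)" if fX: "f \<in> X" and j: "j < m" for f j
  proof -
    define g where "g = f - (\<Sum>k\<in>J. fscale (f (x k)) (d k))"
    have gX: "g \<in> X" unfolding g_def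
      by (intro V.subspace_diff[OF sub fX] V.subspace_sum[OF sub] V.subspace_scale[OF sub] d(1))
    have gval: "g y = f y - (\<Sum>k\<in>J. f (x k) * d k y)" for y
      by (simp add: g_def fun_diff_def fsum_apply fscale_def)
    have "g (x j') = 0" if j': "j' \<in> J" for j'
    proof -
      have "(\<Sum>k\<in>J. f (x k) * d k (x j')) = (\<Sum>k\<in>J. if k = j' then f (x k) else 0)"
        using d j' by (intro sum.cong refl) auto
      also have "\<dots> = f (x j')" using finJ j' by simp
      finally show ?thesis by (simp add: gval)
    qed
    hence "g (x j) = 0" using Jdet[OF gX] j by blast
    thus ?thesis by (simp add: gval e_def)
  qed
  show ?thesis
  proof (cases "J = {}")
    case True
    have z: "f (x j) = 0" if "f \<in> X" "j < m" for f j using repr[OF that] True by simp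
    have "(SUP f\<in>B'. \<bar>\<Sum>j<m. \<epsilon> j * \<bar>f (x j)\<bar> powr q\<bar>) = 0" for \<epsilon> :: "nat \<Rightarrow> real"
    proof -
      have zt: "\<bar>\<Sum>j<m. \<epsilon> j * \<bar>f (x j)\<bar> powr q\<bar> = 0" if "f \<in> B'" for f
      proof -
        have "\<forall>j\<in>{..<m}. \<epsilon> j * \<bar>f (x j)\<bar> powr q = 0" using z[of f] that q by (auto simp: B'_def)
        hence "(\<Sum>j<m. \<epsilon> j * \<bar>f (x j)\<bar> powr q) = 0" by (rule sum.neutral)
        thus ?thesis by simp
      qed
      have "(\<lambda>f. \<bar>\<Sum>j<m. \<epsilon> j * \<bar>f (x j)\<bar> powr q\<bar>) ` B' = {0}"
        using zt B'0 by force
      thus ?thesis by simp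
    qed
    hence "(\<Sum>\<epsilon>\<in>({..<m} \<rightarrow>\<^sub>E {-1, 1::real}). (SUP f\<in>B'. \<bar>\<Sum>j<m. \<epsilon> j * \<bar>f (x j)\<bar> powr q\<bar>)) / 2 ^ m = 0"
      by simp
    moreover have "0 \<le> 50 * q * H powr (q / 2) * sqrt (real N) * sqrt S" using q S0 by simp
    ultimately show ?thesis by (simp add: B'_def S_def)
  next
    case False
    define crd where "crd = (\<lambda>f::(nat \<Rightarrow> real) \<Rightarrow> real. restrict (\<lambda>k. f (x k)) J)"
    define Y where "Y = crd ` B'"
    have Ysub: "Y \<subseteq> PiE J (\<lambda>_. UNIV)" by (auto simp: Y_def crd_def)
    have crd_sum: "(\<Sum>k\<in>J. crd f k * e k j) = f (x j)" if "f \<in> B'" "j < m" for f j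
      using repr[of f j] that by (simp add: crd_def B'_def)
    have bndY: "\<bar>\<Sum>k\<in>J. a k * e k j\<bar> \<le> H" if "a \<in> Y" "j < m" for a j
      using that bndf crd_sum by (auto simp: Y_def)
    have cov: "\<exists>Net. Net \<subseteq> B' \<and> finite Net \<and> real (card Net) \<le> (1 + 2*H/\<delta>)^card J \<and>
                   (\<forall>t\<in>B'. \<exists>s\<in>Net. \<forall>j<m. \<bar>t (x j) - s (x j)\<bar> \<le> \<delta>)" if \<delta>: "\<delta> > 0" for \<delta>
    proof -
      obtain Net' where N': "Net' \<subseteq> Y" "finite Net'" "real (card Net') \<le> (1 + 2 * H / \<delta>) ^ card J"
        "\<forall>a\<in>Y. \<exists>b\<in>Net'. \<forall>j<m. \<bar>\<Sum>k\<in>J. (a k - b k) * e k j\<bar> \<le> \<delta>"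
        using cover_exists[OF finJ Jsub dirac Ysub bndY \<delta>] H by auto
      define Net where "Net = inv_into B' crd ` Net'"
      have "Net \<subseteq> B'" using N'(1) by (auto simp: Net_def Y_def inv_into_into)
      moreover have "finite Net" using N'(2) by (simp add: Net_def)
      moreover have "real (card Net) \<le> (1 + 2 * H / \<delta>) ^ card J"
        using N'(3) card_image_le[OF N'(2), of "inv_into B' crd"] unfolding Net_def by linarith
      moreover have "\<forall>t\<in>B'. \<exists>s\<in>Net. \<forall>j<m. \<bar>t (x j) - s (x j)\<bar> \<le> \<delta>"
      proof
        fix t assume t: "t \<in> B'"
        then obtain b where b: "b \<in> Net'" "\<forall>j<m. \<bar>\<Sum>k\<in>J. (crd t k - b k) * e k j\<bar> \<le> \<delta>"
          using N'(4) by (auto simp: Y_def)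
        define s where "s = inv_into B' crd b"
        have sB: "s \<in> B'" using b(1) N'(1) by (auto simp: s_def Y_def inv_into_into)
        have cs: "crd s = b" using b(1) N'(1) by (auto simp: s_def Y_def f_inv_into_f)
        have "\<bar>t (x j) - s (x j)\<bar> \<le> \<delta>" if j: "j < m" for j
        proof -
          have "t (x j) - s (x j) = (\<Sum>k\<in>J. crd t k * e k j) - (\<Sum>k\<in>J. crd s k * e k j)"
            using crd_sum[OF t j] crd_sum[OF sB j] by simp
          also have "\<dots> = (\<Sum>k\<in>J. (crd t k - b k) * e k j)"
            by (simp add: cs sum_subtractf[symmetric] left_diff_distrib)
          finally show ?thesis using b(2) j by simp
        qed
        moreover have "s \<in> Net" using b(1) by (simp add: s_def Net_def)
        ultimately show "\<exists>s\<in>Net. \<forall>j<m. \<bar>t (x j) - s (x j)\<bar> \<le> \<delta>" by blast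
      qed
      ultimately show ?thesis by blast
    qed
    have n1: "card J \<ge> 1" using False finJ by (simp add: Suc_le_eq card_gt_0_iff)
    have "(\<Sum>\<epsilon>\<in>({..<m} \<rightarrow>\<^sub>E {-1, 1::real}). (SUP t\<in>B'. \<bar>\<Sum>j<m. \<epsilon> j * \<bar>t (x j)\<bar> powr q\<bar>)) / 2^m
         \<le> 50 * q * H powr (q / 2) * sqrt (real (card J)) * sqrt S"
      using chaining[of B' q H "card J" m "\<lambda>t j. t (x j)" S] B'0 q H n1 bndf Sb cov by blast
    also have "\<dots> \<le> 50 * q * H powr (q / 2) * sqrt (real N) * sqrt S"
      using cardJ q S0 by (intro mult_right_mono mult_left_mono) auto
    finally show ?thesis by (simp add: B'_def S_def)
  qed
qed

theorem theorem4p3: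
  shows "\<exists>c::real. c > 0 \<and>
    (\<forall>(d::nat) (\<Omega>::(nat \<Rightarrow> real) set) (\<mu>::(nat \<Rightarrow> real) measure) (X::((nat \<Rightarrow> real) \<Rightarrow> real) set)
       (N::nat) (q::real) (H::real) (m::nat) (x::nat \<Rightarrow> (nat \<Rightarrow> real)).
      d \<ge> 1 \<and> \<Omega> \<subseteq> Rd_set d \<and> compact \<Omega> \<and>
      prob_space \<mu> \<and> space \<mu> = \<Omega> \<and> sets \<mu> = sets (restrict_space borel \<Omega>) \<and>
      X \<subseteq> C_space \<Omega> \<and> module.subspace fscale X \<and> (\<exists>B. finite B \<and> module.span fscale B = X) \<and> vector_space.dim fscale X = N \<and>
      2 \<le> q \<and> H > 0 \<and> (\<forall>f\<in>X. sup_norm \<Omega> f \<le> H * Lq_norm \<mu> q f) \<and>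
      (\<forall>j<m. x j \<in> \<Omega>)
      \<longrightarrow>
      (\<Sum>\<epsilon>\<in>({..<m} \<rightarrow>\<^sub>E {-1, 1::real}).
          (SUP f\<in>{f\<in>X. Lq_norm \<mu> q f \<le> 1}. \<bar>\<Sum>j<m. \<epsilon> j * \<bar>f (x j)\<bar> powr q\<bar>)) / 2 ^ m
      \<le> c * q * H powr (q / 2) * sqrt (real N) *
         sqrt (SUP h\<in>{h\<in>X. Lq_norm \<mu> q h \<le> 1}. (\<Sum>j<m. \<bar>h (x j)\<bar> powr q)))"
proof (rule exI[of _ 50], intro conjI allI impI)
  show "(50::real) > 0" by simp
  fix d \<Omega> \<mu> X N q H m x
  assume A: "d \<ge> 1 \<and> \<Omega> \<subseteq> Rd_set d \<and> compact \<Omega> \<and>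
      prob_space (\<mu>::(nat \<Rightarrow> real) measure) \<and> space \<mu> = \<Omega> \<and> sets \<mu> = sets (restrict_space borel \<Omega>) \<and>
      (X::((nat \<Rightarrow> real) \<Rightarrow> real) set) \<subseteq> C_space \<Omega> \<and> module.subspace fscale X \<and> (\<exists>B. finite B \<and> module.span fscale B = X) \<and> vector_space.dim fscale X = N \<and>
      2 \<le> q \<and> H > 0 \<and> (\<forall>f\<in>X. sup_norm \<Omega> f \<le> H * Lq_norm \<mu> q f) \<and>
      (\<forall>j<(m::nat). x j \<in> \<Omega>)"
  show "(\<Sum>\<epsilon>\<in>({..<m} \<rightarrow>\<^sub>E {-1, 1::real}).
          (SUP f\<in>{f\<in>X. Lq_norm \<mu> q f \<le> 1}. \<bar>\<Sum>j<m. \<epsilon> j * \<bar>f (x j)\<bar> powr q\<bar>)) / 2 ^ m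
      \<le> 50 * q * H powr (q / 2) * sqrt (real N) *
         sqrt (SUP h\<in>{h\<in>X. Lq_norm \<mu> q h \<le> 1}. (\<Sum>j<m. \<bar>h (x j)\<bar> powr q))"
    using A by (intro main_bound) auto
qed

end
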